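(* Let $X$ be a Hausdorff $k$-space and $A$ a full unital subalgebra of $C(X)$; when $\mathbb{K}=\mathbb{C}$ assume moreover that $A$ is self-adjoint ($f\in A\Rightarrow\overline f\in A$). Let $\tau$ be a locally convex topology on $A$ making the inclusion $(A,\tau)\hookrightarrow C(X)$ continuous, and let $\chi_c(A)$ be the set of $\tau$-continuous characters (unital multiplicative linear functionals) of $A$ with the subspace topology of $A'_c$, i.e. the topology of uniform convergence on precompact subsets of $(A,\tau)$. If $A_{[0,1]}$ separates compact sets and closed sets in $X$, then the map $\delta:X\to\chi_c(A)$, $x\mapsto\delta_x$ ($\delta_x(f)=f(x)$) is well defined and is a homeomorphism onto its image. If in addition $\tau$ is compactly localized, then $\delta$ is surjective, hence a homeomorphism $X\to\chi_c(A)$.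
   Context: A Hausdorff space is a $k$-space if every subset meeting each compact set in a relatively closed set is closed. $C(X)$ is the algebra of continuous scalar functions with the topology of uniform convergence on compact sets. A unital subalgebra $A\subseteq C(X)$ is full if whenever $f\in A$ is invertible in $C(X)$ (i.e. vanishes nowhere), $f^{-1}\in A$. $A_{[0,1]}=\{f\in A: f(x)\in[0,1]\ \forall x\in X\}$. $A_{[0,1]}$ separates compact sets and closed sets if for every compact $K$ and closed $C$ with $K\cap C=\emptyset$ there is $f\in A_{[0,1]}$ with $f|_K=1$ and $f|_C=0$. A locally convex topology $\tau$ on a subspace $A\subseteq C(X)$ is compactly localized if for every $\tau$-continuous seminorm $q$ on $A$ there is a compact $K\subseteq X$ such that $q(f)=0$ for all $f\in A$ with $f|_K=0$. *)

theory Defs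
  imports "HOL-Analysis.Analysis" "HOL-Library.FuncSet"
begin

text \<open>The space X is a type 'a with its topology (class t2_space = Hausdorff);
  C(X) consists of the continuous 'k-valued functions on 'a, 'k the scalar field.\<close>

definition Cfun :: "('a::topological_space \<Rightarrow> 'k::real_normed_field) set" where
  "Cfun = {f. continuous_on UNIV f}"

definition compact_open_topology :: "('a::topological_space \<Rightarrow> 'k::real_normed_field) topology" where
  "compact_open_topology = topology (\<lambda>U. U \<subseteq> Cfun \<and>
     (\<forall>f\<in>U. \<exists>K e. compact K \<and> e > 0 \<and>
        {g \<in> Cfun. \<forall>x\<in>K. norm (g x - f x) < e} \<subseteq> U))"

definition unital_subalgebra :: "('a::topological_space \<Rightarrow> 'k::real_normed_field) set \<Rightarrow> bool" where
  "unital_subalgebra A \<longleftrightarrow> A \<subseteq> Cfun \<and> (\<lambda>x. 1) \<in> A \<and>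
     (\<forall>f\<in>A. \<forall>g\<in>A. (\<lambda>x. f x + g x) \<in> A) \<and>
     (\<forall>f\<in>A. \<forall>g\<in>A. (\<lambda>x. f x * g x) \<in> A) \<and>
     (\<forall>c. \<forall>f\<in>A. (\<lambda>x. c * f x) \<in> A)"

definition full_subalgebra :: "('a \<Rightarrow> 'k::real_normed_field) set \<Rightarrow> bool" where
  "full_subalgebra A \<longleftrightarrow> (\<forall>f\<in>A. (\<forall>x. f x \<noteq> 0) \<longrightarrow> (\<lambda>x. inverse (f x)) \<in> A)"

definition self_adjoint :: "('a \<Rightarrow> complex) set \<Rightarrow> bool" where
  "self_adjoint A \<longleftrightarrow> (\<forall>f\<in>A. (\<lambda>x. cnj (f x)) \<in> A)"

definition locally_convex_topology ::
  "('a \<Rightarrow> 'k::real_normed_field) set \<Rightarrow> ('a \<Rightarrow> 'k) topology \<Rightarrow> bool" where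
  "locally_convex_topology A \<tau> \<longleftrightarrow> topspace \<tau> = A \<and>
     continuous_map (prod_topology \<tau> \<tau>) \<tau> (\<lambda>(f,g). \<lambda>x. f x + g x) \<and>
     continuous_map (prod_topology euclidean \<tau>) \<tau> (\<lambda>(c,f). \<lambda>x. c * f x) \<and>
     (\<forall>U. openin \<tau> U \<and> (\<lambda>x. 0) \<in> U \<longrightarrow>
        (\<exists>V. openin \<tau> V \<and> (\<lambda>x. 0) \<in> V \<and> V \<subseteq> U \<and>
             (\<forall>f\<in>V. \<forall>g\<in>V. \<forall>t::real. 0 \<le> t \<and> t \<le> 1 \<longrightarrow>
                (\<lambda>x. of_real t * f x + of_real (1 - t) * g x) \<in> V)))"

definition precompact_in :: "('a \<Rightarrow> 'k::real_normed_field) topology \<Rightarrow> ('a \<Rightarrow> 'k) set \<Rightarrow> bool" where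
  "precompact_in \<tau> B \<longleftrightarrow> B \<subseteq> topspace \<tau> \<and>
     (\<forall>U. openin \<tau> U \<and> (\<lambda>x. 0) \<in> U \<longrightarrow>
        (\<exists>F. finite F \<and> F \<subseteq> topspace \<tau> \<and>
             B \<subseteq> (\<Union>f\<in>F. (\<lambda>g. \<lambda>x. f x + g x) ` U)))"

definition character :: "('a \<Rightarrow> 'k::real_normed_field) set \<Rightarrow> (('a \<Rightarrow> 'k) \<Rightarrow> 'k) \<Rightarrow> bool" where
  "character A \<phi> \<longleftrightarrow> \<phi> \<in> extensional A \<and>
     (\<forall>f\<in>A. \<forall>g\<in>A. \<phi> (\<lambda>x. f x + g x) = \<phi> f + \<phi> g) \<and>
     (\<forall>c. \<forall>f\<in>A. \<phi> (\<lambda>x. c * f x) = c * \<phi> f) \<and>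
     (\<forall>f\<in>A. \<forall>g\<in>A. \<phi> (\<lambda>x. f x * g x) = \<phi> f * \<phi> g) \<and>
     \<phi> (\<lambda>x. 1) = 1"

definition cont_characters ::
  "('a \<Rightarrow> 'k::real_normed_field) set \<Rightarrow> ('a \<Rightarrow> 'k) topology \<Rightarrow> (('a \<Rightarrow> 'k) \<Rightarrow> 'k) set" where
  "cont_characters A \<tau> = {\<phi>. character A \<phi> \<and> continuous_map \<tau> euclidean \<phi>}"

text \<open>Topology on a set S of functionals on (A, tau) induced by the topology of
  A'_c, i.e. uniform convergence on precompact subsets of (A, tau).\<close>
definition ucp_topology ::
  "('a \<Rightarrow> 'k::real_normed_field) topology \<Rightarrow> (('a \<Rightarrow> 'k) \<Rightarrow> 'k) set \<Rightarrow> (('a \<Rightarrow> 'k) \<Rightarrow> 'k) topology" where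
  "ucp_topology \<tau> S = topology (\<lambda>U. U \<subseteq> S \<and>
     (\<forall>\<phi>\<in>U. \<exists>B e. precompact_in \<tau> B \<and> e > 0 \<and>
        {\<psi> \<in> S. \<forall>f\<in>B. norm (\<psi> f - \<phi> f) < e} \<subseteq> U))"

definition separates_compact_closed :: "('a::topological_space \<Rightarrow> 'k::real_normed_field) set \<Rightarrow> bool" where
  "separates_compact_closed A \<longleftrightarrow>
     (\<forall>K C. compact K \<and> closed C \<and> K \<inter> C = {} \<longrightarrow>
        (\<exists>f\<in>A. (\<forall>x. f x \<in> of_real ` {0..1}) \<and> (\<forall>x\<in>K. f x = 1) \<and> (\<forall>x\<in>C. f x = 0)))"

definition seminorm_on :: "('a \<Rightarrow> 'k::real_normed_field) set \<Rightarrow> (('a \<Rightarrow> 'k) \<Rightarrow> real) \<Rightarrow> bool" where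
  "seminorm_on A q \<longleftrightarrow>
     (\<forall>f\<in>A. \<forall>g\<in>A. q (\<lambda>x. f x + g x) \<le> q f + q g) \<and>
     (\<forall>c. \<forall>f\<in>A. q (\<lambda>x. c * f x) = norm c * q f)"

definition compactly_localized ::
  "('a::topological_space \<Rightarrow> 'k::real_normed_field) set \<Rightarrow> ('a \<Rightarrow> 'k) topology \<Rightarrow> bool" where
  "compactly_localized A \<tau> \<longleftrightarrow>
     (\<forall>q. seminorm_on A q \<and> continuous_map \<tau> euclidean q \<longrightarrow>
        (\<exists>K. compact K \<and> (\<forall>f\<in>A. (\<forall>x\<in>K. f x = 0) \<longrightarrow> q f = 0)))"

definition eval_map :: "('a \<Rightarrow> 'k) set \<Rightarrow> 'a \<Rightarrow> (('a \<Rightarrow> 'k) \<Rightarrow> 'k)" where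
  "eval_map A x = restrict (\<lambda>f. f x) A"

end

theory Submission
  imports Defs
begin

lemma co_open:
  "openin (compact_open_topology :: ('a::topological_space \<Rightarrow> 'k::real_normed_field) topology) U \<longleftrightarrow>
    (U \<subseteq> Cfun \<and> (\<forall>f\<in>U. \<exists>K e. compact K \<and> e > 0 \<and>
        {g \<in> Cfun. \<forall>x\<in>K. norm (g x - f x) < e} \<subseteq> U))"
proof -
  let ?P = "\<lambda>U. U \<subseteq> (Cfun :: ('a \<Rightarrow> 'k) set) \<and>
     (\<forall>f\<in>U. \<exists>K e. compact K \<and> e > 0 \<and>
        {g \<in> Cfun. \<forall>x\<in>K. norm (g x - f x) < e} \<subseteq> U)"
  have I1: "?P (S \<inter> T)" if S: "?P S" and T: "?P T" for S T
    proof -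
    show "?P (S \<inter> T)"
    proof (intro conjI ballI)
      show "S \<inter> T \<subseteq> Cfun" using S by auto
      fix f assume "f \<in> S \<inter> T"
      then have fS: "f \<in> S" and fT: "f \<in> T" by auto
      obtain K1 e1 where 1: "compact K1" "e1 > 0" "{g \<in> Cfun. \<forall>x\<in>K1. norm (g x - f x) < e1} \<subseteq> S"
        using S fS by blast
      obtain K2 e2 where 2: "compact K2" "e2 > 0" "{g \<in> Cfun. \<forall>x\<in>K2. norm (g x - f x) < e2} \<subseteq> T"
        using T fT by blast
      show "\<exists>K e. compact K \<and> e > 0 \<and> {g \<in> Cfun. \<forall>x\<in>K. norm (g x - f x) < e} \<subseteq> S \<inter> T"
      proof (intro exI conjI)
        show "compact (K1 \<union> K2)" using 1 2 by auto
        show "min e1 e2 > 0" using 1 2 by auto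
        show "{g \<in> Cfun. \<forall>x\<in>K1 \<union> K2. norm (g x - f x) < min e1 e2} \<subseteq> S \<inter> T"
        proof
          fix g assume g: "g \<in> {g \<in> Cfun. \<forall>x\<in>K1 \<union> K2. norm (g x - f x) < min e1 e2}"
          then have "g \<in> {g \<in> Cfun. \<forall>x\<in>K1. norm (g x - f x) < e1}" by auto
          moreover have "g \<in> {g \<in> Cfun. \<forall>x\<in>K2. norm (g x - f x) < e2}" using g by auto
          ultimately show "g \<in> S \<inter> T" using 1(3) 2(3) by blast
        qed
      qed
    qed
  qed
  have I2: "?P (\<Union>K)" if K: "\<forall>S\<in>K. ?P S" for K
    proof -
    show "?P (\<Union>K)"
    proof (intro conjI ballI)
      show "\<Union>K \<subseteq> Cfun" using K by auto
      fix f assume "f \<in> \<Union>K"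
      then obtain S where SK: "S \<in> K" and fS: "f \<in> S" by auto
      from K SK have PS: "?P S" by (rule bspec)
      then obtain K' e where "compact K'" "e > 0" "{g \<in> Cfun. \<forall>x\<in>K'. norm (g x - f x) < e} \<subseteq> S"
        using fS by blast
      moreover have "S \<subseteq> \<Union>K" using SK by blast
      ultimately show "\<exists>Ka e. compact Ka \<and> e > 0 \<and> {g \<in> Cfun. \<forall>x\<in>Ka. norm (g x - f x) < e} \<subseteq> \<Union>K"
        by (meson order_trans)
    qed
  qed
  have "istopology ?P" unfolding istopology_def
  proof (rule conjI)
    show "\<forall>S T. ?P S \<longrightarrow> ?P T \<longrightarrow> ?P (S \<inter> T)" by (intro allI impI) (rule I1; assumption)
    show "\<forall>K. (\<forall>S\<in>K. ?P S) \<longrightarrow> ?P (\<Union>K)" by (intro allI impI) (rule I2; assumption)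
  qed
  then show ?thesis unfolding compact_open_topology_def by simp
qed

lemma precompact_Un:
  assumes "precompact_in \<tau> B1" "precompact_in \<tau> B2"
  shows "precompact_in \<tau> (B1 \<union> B2)"
  unfolding precompact_in_def
proof (intro conjI allI impI)
  show "B1 \<union> B2 \<subseteq> topspace \<tau>" using assms unfolding precompact_in_def by auto
  fix U assume U: "openin \<tau> U \<and> (\<lambda>x. 0) \<in> U"
  obtain F1 where F1: "finite F1" "F1 \<subseteq> topspace \<tau>" "B1 \<subseteq> (\<Union>f\<in>F1. (\<lambda>g. \<lambda>x. f x + g x) ` U)"
    using assms(1) U unfolding precompact_in_def by meson
  obtain F2 where F2: "finite F2" "F2 \<subseteq> topspace \<tau>" "B2 \<subseteq> (\<Union>f\<in>F2. (\<lambda>g. \<lambda>x. f x + g x) ` U)"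
    using assms(2) U unfolding precompact_in_def by meson
  show "\<exists>F. finite F \<and> F \<subseteq> topspace \<tau> \<and> B1 \<union> B2 \<subseteq> (\<Union>f\<in>F. (\<lambda>g. \<lambda>x. f x + g x) ` U)"
    apply (rule exI[of _ "F1 \<union> F2"]) using F1 F2 by auto
qed

lemma ucp_open:
  "openin (ucp_topology \<tau> S) U \<longleftrightarrow> (U \<subseteq> S \<and>
     (\<forall>\<phi>\<in>U. \<exists>B e. precompact_in \<tau> B \<and> e > 0 \<and>
        {\<psi> \<in> S. \<forall>f\<in>B. norm (\<psi> f - \<phi> f) < e} \<subseteq> U))"
proof -
  let ?P = "\<lambda>U. U \<subseteq> S \<and>
     (\<forall>\<phi>\<in>U. \<exists>B e. precompact_in \<tau> B \<and> e > 0 \<and>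
        {\<psi> \<in> S. \<forall>f\<in>B. norm (\<psi> f - \<phi> f) < e} \<subseteq> U)"
  have I1: "?P (S1 \<inter> T)" if S: "?P S1" and T: "?P T" for S1 T
    proof -
    show "?P (S1 \<inter> T)"
    proof (intro conjI ballI)
      show "S1 \<inter> T \<subseteq> S" using S by auto
      fix f assume "f \<in> S1 \<inter> T"
      then have fS: "f \<in> S1" and fT: "f \<in> T" by auto
      obtain K1 e1 where 1: "precompact_in \<tau> K1" "e1 > 0" "{g \<in> S. \<forall>x\<in>K1. norm (g x - f x) < e1} \<subseteq> S1"
        using S fS by blast
      obtain K2 e2 where 2: "precompact_in \<tau> K2" "e2 > 0" "{g \<in> S. \<forall>x\<in>K2. norm (g x - f x) < e2} \<subseteq> T"
        using T fT by blast
      show "\<exists>K e. precompact_in \<tau> K \<and> e > 0 \<and> {g \<in> S. \<forall>x\<in>K. norm (g x - f x) < e} \<subseteq> S1 \<inter> T"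
      proof (intro exI conjI)
        show "precompact_in \<tau> (K1 \<union> K2)" by (rule precompact_Un[OF 1(1) 2(1)])
        show "min e1 e2 > 0" using 1 2 by auto
        show "{g \<in> S. \<forall>x\<in>K1 \<union> K2. norm (g x - f x) < min e1 e2} \<subseteq> S1 \<inter> T"
        proof
          fix g assume g: "g \<in> {g \<in> S. \<forall>x\<in>K1 \<union> K2. norm (g x - f x) < min e1 e2}"
          then have "g \<in> {g \<in> S. \<forall>x\<in>K1. norm (g x - f x) < e1}" by auto
          moreover have "g \<in> {g \<in> S. \<forall>x\<in>K2. norm (g x - f x) < e2}" using g by auto
          ultimately show "g \<in> S1 \<inter> T" using 1(3) 2(3) by blast
        qed
      qed
    qed
  qed
  have I2: "?P (\<Union>K)" if K: "\<forall>S\<in>K. ?P S" for K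
    proof -
    show "?P (\<Union>K)"
    proof (intro conjI ballI)
      show "\<Union>K \<subseteq> S" using K by auto
      fix f assume "f \<in> \<Union>K"
      then obtain S1 where SK: "S1 \<in> K" and fS: "f \<in> S1" by auto
      from K SK have PS: "?P S1" by (rule bspec)
      then obtain K' e where "precompact_in \<tau> K'" "e > 0" "{g \<in> S. \<forall>x\<in>K'. norm (g x - f x) < e} \<subseteq> S1"
        using fS by blast
      moreover have "S1 \<subseteq> \<Union>K" using SK by blast
      ultimately show "\<exists>Ka e. precompact_in \<tau> Ka \<and> e > 0 \<and> {g \<in> S. \<forall>x\<in>Ka. norm (g x - f x) < e} \<subseteq> \<Union>K"
        by (meson order_trans)
    qed
  qed
  have "istopology ?P" unfolding istopology_def
  proof (rule conjI)
    show "\<forall>S T. ?P S \<longrightarrow> ?P T \<longrightarrow> ?P (S \<inter> T)" by (intro allI impI) (rule I1; assumption)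
    show "\<forall>K. (\<forall>S\<in>K. ?P S) \<longrightarrow> ?P (\<Union>K)" by (intro allI impI) (rule I2; assumption)
  qed
  then show ?thesis unfolding ucp_topology_def by simp
qed

lemma ucp_topspace: "topspace (ucp_topology \<tau> S) = S"
proof -
  have "precompact_in \<tau> {}" unfolding precompact_in_def by (auto intro!: exI[of _ "{}"])
  then have "openin (ucp_topology \<tau> S) S" unfolding ucp_open by (auto intro!: exI[of _ "{}"] exI[of _ 1])
  moreover have "topspace (ucp_topology \<tau> S) \<subseteq> S"
    using ucp_open[of \<tau> S "topspace (ucp_topology \<tau> S)"] by simp
  ultimately show ?thesis by (meson openin_subset subset_antisym)
qed


lemma W_open:
  assumes "e > 0" "compact K"
  shows "openin (compact_open_topology :: ('a::topological_space \<Rightarrow> 'k::real_normed_field) topology)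
           {g \<in> Cfun. \<exists>d<e. \<forall>z\<in>K. norm (g z) \<le> d}"
  unfolding co_open
proof (intro conjI ballI)
  show "{g \<in> Cfun. \<exists>d<e. \<forall>z\<in>K. norm (g z) \<le> d} \<subseteq> (Cfun :: ('a \<Rightarrow> 'k) set)" by auto
  fix g :: "'a \<Rightarrow> 'k" assume "g \<in> {g \<in> Cfun. \<exists>d<e. \<forall>z\<in>K. norm (g z) \<le> d}"
  then obtain d where d: "d < e" "\<forall>z\<in>K. norm (g z) \<le> d" by auto
  show "\<exists>K' e'. compact K' \<and> e' > 0 \<and>
          {h \<in> Cfun. \<forall>x\<in>K'. norm (h x - g x) < e'} \<subseteq> {g \<in> Cfun. \<exists>d<e. \<forall>z\<in>K. norm (g z) \<le> d}"
  proof (intro exI conjI)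
    show "compact K" by fact
    show "(e - d) / 2 > 0" using d by simp
    show "{h \<in> Cfun. \<forall>x\<in>K. norm (h x - g x) < (e - d) / 2} \<subseteq> {g \<in> Cfun. \<exists>d<e. \<forall>z\<in>K. norm (g z) \<le> d}"
    proof safe
      fix h :: "'a \<Rightarrow> 'k" assume h: "h \<in> Cfun" "\<forall>x\<in>K. norm (h x - g x) < (e - d) / 2"
      have "\<forall>z\<in>K. norm (h z) \<le> d + (e - d) / 2"
      proof
        fix z assume z: "z \<in> K"
        have "norm (h z) \<le> norm (g z) + norm (h z - g z)" by (metis add.commute diff_add_cancel norm_triangle_ineq)
        moreover have "norm (h z - g z) < (e - d) / 2" using h(2) z by blast
        moreover have "norm (g z) \<le> d" using d(2) z by blast
        ultimately show "norm (h z) \<le> d + (e - d) / 2" by linarith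
      qed
      moreover have "d + (e - d) / 2 < e" using d(1) by (simp add: field_simps)
      ultimately show "\<exists>d<e. \<forall>z\<in>K. norm (h z) \<le> d" by blast
    qed
  qed
qed

locale setting =
  fixes A :: "('a::t2_space \<Rightarrow> 'k::real_normed_field) set"
    and \<tau> :: "('a \<Rightarrow> 'k) topology" and cj :: "'k \<Rightarrow> 'k"
  assumes kX: "k_space (euclidean :: 'a topology)"
    and sub: "unital_subalgebra A" and full: "full_subalgebra A"
    and cjA: "\<And>f. f \<in> A \<Longrightarrow> (\<lambda>x. cj (f x)) \<in> A"
    and cjn: "\<And>z. z * cj z = of_real (norm z ^ 2)"
    and lc: "locally_convex_topology A \<tau>"
    and inc: "continuous_map \<tau> compact_open_topology id"
    and sep: "separates_compact_closed A"
begin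

lemma AC: "f \<in> A \<Longrightarrow> f \<in> Cfun" using sub unfolding unital_subalgebra_def by auto
lemma one: "(\<lambda>x. 1) \<in> A" using sub unfolding unital_subalgebra_def by auto
lemma add: "f \<in> A \<Longrightarrow> g \<in> A \<Longrightarrow> (\<lambda>x. f x + g x) \<in> A" using sub unfolding unital_subalgebra_def by auto
lemma mult: "f \<in> A \<Longrightarrow> g \<in> A \<Longrightarrow> (\<lambda>x. f x * g x) \<in> A" using sub unfolding unital_subalgebra_def by auto
lemma smul: "f \<in> A \<Longrightarrow> (\<lambda>x. c * f x) \<in> A" using sub unfolding unital_subalgebra_def by auto
lemma const: "(\<lambda>x. c) \<in> A" using smul[OF one, of c] by simp
lemma zero: "(\<lambda>x. 0) \<in> A" using const .
lemma top: "topspace \<tau> = A" using lc unfolding locally_convex_topology_def by auto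
lemma pre_open: "openin compact_open_topology Q \<Longrightarrow> openin \<tau> {f \<in> A. f \<in> Q}"
  using inc top unfolding continuous_map_def by auto
lemma contf: "f \<in> A \<Longrightarrow> continuous_on UNIV f" using AC unfolding Cfun_def by auto

lemma char_delta: "character A (eval_map A x)"
  unfolding character_def eval_map_def
  by (simp add: add mult smul one restrict_extensional)

lemma cont_delta: "continuous_map \<tau> euclidean (eval_map A x)"
  unfolding continuous_map_def
proof (intro conjI allI impI)
  show "eval_map A x \<in> topspace \<tau> \<rightarrow> topspace euclidean" by simp
  fix U :: "'k set" assume "openin euclidean U"
  then have U: "open U" by simp
  define Q where "Q = {g \<in> (Cfun :: ('a \<Rightarrow> 'k) set). g x \<in> U}"
  have "openin compact_open_topology Q"
    unfolding co_open
  proof (intro conjI ballI)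
    show "Q \<subseteq> Cfun" unfolding Q_def by auto
    fix g assume g: "g \<in> Q"
    then obtain e where e: "e > 0" "ball (g x) e \<subseteq> U" using U open_contains_ball_eq unfolding Q_def by blast
    show "\<exists>K e. compact K \<and> 0 < e \<and> {h \<in> Cfun. \<forall>x\<in>K. norm (h x - g x) < e} \<subseteq> Q"
    proof (intro exI conjI)
      show "compact {x}" by simp
      show "e > 0" by fact
      show "{h \<in> Cfun. \<forall>x\<in>{x}. norm (h x - g x) < e} \<subseteq> Q"
        using e unfolding Q_def by (auto simp: dist_norm norm_minus_commute subset_iff)
    qed
  qed
  from pre_open[OF this] have "openin \<tau> {f \<in> A. f \<in> Q}" .
  moreover have "{f \<in> A. f \<in> Q} = {f \<in> topspace \<tau>. eval_map A x f \<in> U}"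
    unfolding Q_def top eval_map_def using AC by auto
  ultimately show "openin \<tau> {f \<in> topspace \<tau>. eval_map A x f \<in> U}" by simp
qed

lemma delta_in: "eval_map A x \<in> cont_characters A \<tau>"
  unfolding cont_characters_def using char_delta cont_delta by simp

lemma delta_inj: "inj (eval_map A)"
proof (rule injI)
  fix x y assume eq: "eval_map A x = eval_map A y"
  show "x = y"
  proof (rule ccontr)
    assume "x \<noteq> y"
    then have "{x} \<inter> {y} = {}" by auto
    then obtain f where f: "f \<in> A" "\<forall>z\<in>{x}. f z = 1" "\<forall>z\<in>{y}. f z = 0"
      using sep unfolding separates_compact_closed_def
      by (metis compact_sing closed_singleton)
    have "eval_map A x f = 1" "eval_map A y f = 0" using f unfolding eval_map_def by auto
    then show False using eq by simp
  qed
qed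

lemma precompact_sing: "f \<in> A \<Longrightarrow> precompact_in \<tau> {f}"
  unfolding precompact_in_def top
proof (intro conjI allI impI)
  assume "f \<in> A" then show "{f} \<subseteq> A" by simp
  fix U assume U: "openin \<tau> U \<and> (\<lambda>x. 0) \<in> U"
  have "f \<in> (\<lambda>g. \<lambda>x. f x + g x) ` U" using U by (intro image_eqI[of _ _ "\<lambda>x. 0"]) auto
  then show "\<exists>F. finite F \<and> F \<subseteq> A \<and> {f} \<subseteq> (\<Union>f\<in>F. (\<lambda>g. \<lambda>x. f x + g x) ` U)"
    using \<open>f \<in> A\<close> by (intro exI[of _ "{f}"]) auto
qed


lemma equicont:
  assumes K: "compact K" and B: "precompact_in \<tau> B" and e: "e > 0" and x: "x \<in> K"
  shows "\<exists>V. open V \<and> x \<in> V \<and> (\<forall>y\<in>K \<inter> V. \<forall>f\<in>B. norm (f y - f x) < e)"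
proof -
  define W where "W = {g \<in> (Cfun :: ('a \<Rightarrow> 'k) set). \<exists>d<e/3. \<forall>z\<in>K. norm (g z) \<le> d}"
  have "openin compact_open_topology W" unfolding W_def by (rule W_open) (use e K in auto)
  then have U0: "openin \<tau> {f \<in> A. f \<in> W}" by (rule pre_open)
  have 0: "(\<lambda>x. 0) \<in> {f \<in> A. f \<in> W}" unfolding W_def using zero AC e by (auto intro!: exI[of _ 0])
  obtain F where F: "finite F" "F \<subseteq> topspace \<tau>"
     "B \<subseteq> (\<Union>h\<in>F. (\<lambda>g. \<lambda>x. h x + g x) ` {f \<in> A. f \<in> W})"
  proof -
    have "\<forall>U. openin \<tau> U \<and> (\<lambda>x. 0) \<in> U \<longrightarrow>
        (\<exists>F. finite F \<and> F \<subseteq> topspace \<tau> \<and> B \<subseteq> (\<Union>f\<in>F. (\<lambda>g. \<lambda>x. f x + g x) ` U))"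
      using B unfolding precompact_in_def by blast
    then have "\<exists>F. finite F \<and> F \<subseteq> topspace \<tau> \<and> B \<subseteq> (\<Union>f\<in>F. (\<lambda>g. \<lambda>x. f x + g x) ` {f \<in> A. f \<in> W})"
      using U0 0 by blast
    then show ?thesis using that by blast
  qed
  define V where "V = (\<Inter>h\<in>F. {y. norm (h y - h x) < e/3})"
  have "open V" unfolding V_def
  proof (rule open_INT[OF F(1)], rule ballI)
    fix h assume "h \<in> F"
    then have "continuous_on UNIV h" using F(2) top contf by auto
    then show "open {y. norm (h y - h x) < e / 3}"
      by (intro open_Collect_less continuous_intros)
  qed
  moreover have "x \<in> V" unfolding V_def using e by auto
  moreover have "\<forall>y\<in>K \<inter> V. \<forall>f\<in>B. norm (f y - f x) < e"
  proof (intro ballI)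
    fix y f assume y: "y \<in> K \<inter> V" and f: "f \<in> B"
    then obtain h g where h: "h \<in> F" and g: "g \<in> W" and fe: "f = (\<lambda>x. h x + g x)" using F(3) by blast
    obtain d where d: "d < e/3" "\<forall>z\<in>K. norm (g z) \<le> d" using g unfolding W_def by auto
    have "f y - f x = (h y - h x) + (g y - g x)" unfolding fe by simp
    then have "norm (f y - f x) \<le> norm (h y - h x) + norm (g y - g x)"
      using norm_triangle_ineq by simp
    moreover have "norm (g y - g x) \<le> norm (g y) + norm (g x)" by (rule norm_triangle_ineq4)
    ultimately have "norm (f y - f x) \<le> norm (h y - h x) + norm (g y) + norm (g x)" by linarith
    moreover have "norm (h y - h x) < e/3" using y h unfolding V_def by auto
    moreover have "norm (g y) \<le> d" "norm (g x) \<le> d" using d y x by auto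
    ultimately show "norm (f y - f x) < e" using d(1) by linarith
  qed
  ultimately show ?thesis by blast
qed

lemma delta_cont: "continuous_map euclidean (ucp_topology \<tau> (cont_characters A \<tau>)) (eval_map A)"
proof (rule continuous_map_from_k_space[OF kX])
  fix K :: "'a set" assume "compactin euclidean K"
  then have K: "compact K" by simp
  show "continuous_map (subtopology euclidean K) (ucp_topology \<tau> (cont_characters A \<tau>)) (eval_map A)"
    unfolding continuous_map_def
  proof (intro conjI allI impI)
    show "eval_map A \<in> topspace (subtopology euclidean K) \<rightarrow> topspace (ucp_topology \<tau> (cont_characters A \<tau>))"
      using delta_in by (simp add: ucp_topspace)
    fix U assume U: "openin (ucp_topology \<tau> (cont_characters A \<tau>)) U"
    show "openin (subtopology euclidean K) {x \<in> topspace (subtopology euclidean K). eval_map A x \<in> U}"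
    proof (subst openin_subopen, intro ballI)
      fix x assume x: "x \<in> {x \<in> topspace (subtopology euclidean K). eval_map A x \<in> U}"
      then have xK: "x \<in> K" and xU: "eval_map A x \<in> U" by auto
      obtain B e where B: "precompact_in \<tau> B" "e > 0"
        "{\<psi> \<in> cont_characters A \<tau>. \<forall>f\<in>B. norm (\<psi> f - eval_map A x f) < e} \<subseteq> U"
        using U xU unfolding ucp_open by meson
      obtain V where V: "open V" "x \<in> V" "\<forall>y\<in>K \<inter> V. \<forall>f\<in>B. norm (f y - f x) < e"
        using equicont[OF K B(1) B(2) xK] by blast
      have BA: "B \<subseteq> A" using B(1) top unfolding precompact_in_def by auto
      show "\<exists>T. openin (subtopology euclidean K) T \<and> x \<in> T \<and>
              T \<subseteq> {x \<in> topspace (subtopology euclidean K). eval_map A x \<in> U}"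
      proof (intro exI conjI)
        show "openin (subtopology euclidean K) (V \<inter> K)"
          using V(1) by (auto simp: openin_subtopology)
        show "x \<in> V \<inter> K" using V xK by auto
        show "V \<inter> K \<subseteq> {x \<in> topspace (subtopology euclidean K). eval_map A x \<in> U}"
        proof
          fix y assume y: "y \<in> V \<inter> K"
          have "eval_map A y \<in> {\<psi> \<in> cont_characters A \<tau>. \<forall>f\<in>B. norm (\<psi> f - eval_map A x f) < e}"
            using delta_in V(3) y BA unfolding eval_map_def by auto
          then show "y \<in> {x \<in> topspace (subtopology euclidean K). eval_map A x \<in> U}"
            using B(3) y by auto
        qed
      qed
    qed
  qed
qed

lemma delta_open: "open_map euclidean (subtopology (ucp_topology \<tau> (cont_characters A \<tau>)) (range (eval_map A))) (eval_map A)"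
  unfolding open_map_def
proof (intro allI impI)
  fix W :: "'a set" assume "openin euclidean W"
  then have W: "open W" by simp
  have "\<forall>x\<in>W. \<exists>f. f \<in> A \<and> f x = 1 \<and> (\<forall>y\<in>-W. f y = 0)"
  proof
    fix x assume "x \<in> W"
    then have "compact {x}" "closed (-W)" "{x} \<inter> -W = {}" using W by auto
    then show "\<exists>f. f \<in> A \<and> f x = 1 \<and> (\<forall>y\<in>-W. f y = 0)"
      using sep unfolding separates_compact_closed_def by (metis singletonI)
  qed
  from bchoice[OF this] obtain fx where fx': "\<forall>x\<in>W. fx x \<in> A \<and> fx x x = 1 \<and> (\<forall>y\<in>-W. fx x y = 0)"
    by blast
  then have fx: "\<And>x. x \<in> W \<Longrightarrow> fx x \<in> A \<and> fx x x = 1 \<and> (\<forall>y\<in>-W. fx x y = 0)" by blast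
  define S where "S = cont_characters A \<tau>"
  define T where "T = {\<psi> \<in> S. \<exists>x\<in>W. norm (\<psi> (fx x) - 1) < 1/2}"
  have "openin (ucp_topology \<tau> S) T"
    unfolding ucp_open
  proof (intro conjI ballI)
    show "T \<subseteq> S" unfolding T_def by auto
    fix \<phi> assume "\<phi> \<in> T"
    then obtain x where x: "x \<in> W" "norm (\<phi> (fx x) - 1) < 1/2" unfolding T_def by auto
    show "\<exists>B e. precompact_in \<tau> B \<and> 0 < e \<and> {\<psi> \<in> S. \<forall>f\<in>B. norm (\<psi> f - \<phi> f) < e} \<subseteq> T"
    proof (intro exI conjI)
      show "precompact_in \<tau> {fx x}" using precompact_sing fx x by auto
      show "0 < 1/2 - norm (\<phi> (fx x) - 1)" using x by simp
      show "{\<psi> \<in> S. \<forall>f\<in>{fx x}. norm (\<psi> f - \<phi> f) < 1/2 - norm (\<phi> (fx x) - 1)} \<subseteq> T"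
      proof safe
        fix \<psi> assume \<psi>: "\<psi> \<in> S" "\<forall>f\<in>{fx x}. norm (\<psi> f - \<phi> f) < 1/2 - norm (\<phi> (fx x) - 1)"
        have "norm (\<psi> (fx x) - 1) \<le> norm (\<psi> (fx x) - \<phi> (fx x)) + norm (\<phi> (fx x) - 1)"
          by (rule norm_diff_triangle_le) auto
        then have "norm (\<psi> (fx x) - 1) < 1/2" using \<psi>(2) by auto
        then show "\<psi> \<in> T" unfolding T_def using \<psi>(1) x(1) by auto
      qed
    qed
  qed
  moreover have "eval_map A ` W = T \<inter> range (eval_map A)"
  proof
    show "eval_map A ` W \<subseteq> T \<inter> range (eval_map A)"
    proof
      fix \<phi> assume "\<phi> \<in> eval_map A ` W"
      then obtain y where y: "y \<in> W" "\<phi> = eval_map A y" by auto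
      have "\<phi> (fx y) = 1" using fx[OF y(1)] y(2) unfolding eval_map_def by auto
      then have "\<exists>x\<in>W. norm (\<phi> (fx x) - 1) < 1/2" using y(1) by (intro bexI[of _ y]) auto
      then show "\<phi> \<in> T \<inter> range (eval_map A)" unfolding T_def S_def using y delta_in by auto
    qed
    show "T \<inter> range (eval_map A) \<subseteq> eval_map A ` W"
    proof
      fix \<phi> assume "\<phi> \<in> T \<inter> range (eval_map A)"
      then obtain y x where y: "\<phi> = eval_map A y" and x: "x \<in> W" "norm (\<phi> (fx x) - 1) < 1/2"
        unfolding T_def by auto
      have "\<phi> (fx x) = fx x y" using fx[OF x(1)] y unfolding eval_map_def by auto
      then have "fx x y \<noteq> 0" using x(2) by auto
      then have "y \<in> W" using fx[OF x(1)] by auto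
      then show "\<phi> \<in> eval_map A ` W" using y by auto
    qed
  qed
  ultimately show "openin (subtopology (ucp_topology \<tau> (cont_characters A \<tau>)) (range (eval_map A))) (eval_map A ` W)"
    unfolding S_def by (auto simp: openin_subtopology)
qed

lemma delta_homeo: "homeomorphic_map euclidean (subtopology (ucp_topology \<tau> (cont_characters A \<tau>)) (range (eval_map A))) (eval_map A)"
proof (rule bijective_open_imp_homeomorphic_map)
  show "continuous_map euclidean (subtopology (ucp_topology \<tau> (cont_characters A \<tau>)) (range (eval_map A))) (eval_map A)"
    using delta_cont by (auto simp: continuous_map_in_subtopology)
  show "open_map euclidean (subtopology (ucp_topology \<tau> (cont_characters A \<tau>)) (range (eval_map A))) (eval_map A)"
    by (rule delta_open)
  show "eval_map A ` topspace euclidean = topspace (subtopology (ucp_topology \<tau> (cont_characters A \<tau>)) (range (eval_map A)))"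
    using delta_in by (auto simp: ucp_topspace)
  show "inj_on (eval_map A) (topspace euclidean)" using delta_inj by simp
qed

end


context setting begin

lemma surj_delta:
  assumes cl: "compactly_localized A \<tau>" and \<phi>: "\<phi> \<in> cont_characters A \<tau>"
  shows "\<phi> \<in> range (eval_map A)"
proof -
  have ch: "character A \<phi>" and c\<phi>: "continuous_map \<tau> euclidean \<phi>"
    using \<phi> unfolding cont_characters_def by auto
  have phiext: "\<phi> \<in> extensional A" using ch unfolding character_def by auto
  have padd: "\<And>f g. f \<in> A \<Longrightarrow> g \<in> A \<Longrightarrow> \<phi> (\<lambda>x. f x + g x) = \<phi> f + \<phi> g"
    using ch unfolding character_def by auto
  have psmul: "\<And>c f. f \<in> A \<Longrightarrow> \<phi> (\<lambda>x. c * f x) = c * \<phi> f"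
    using ch unfolding character_def by auto
  have pmult: "\<And>f g. f \<in> A \<Longrightarrow> g \<in> A \<Longrightarrow> \<phi> (\<lambda>x. f x * g x) = \<phi> f * \<phi> g"
    using ch unfolding character_def by auto
  have pone: "\<phi> (\<lambda>x. 1) = 1" using ch unfolding character_def by auto
  have pconst: "\<phi> (\<lambda>x. c) = c" for c using psmul[OF one, of c] pone by simp
  define q where "q = (\<lambda>f. norm (\<phi> f))"
  have "seminorm_on A q" unfolding seminorm_on_def q_def
    by (simp add: padd psmul norm_triangle_ineq norm_mult)
  moreover have "continuous_map \<tau> euclidean q" unfolding q_def
    using continuous_map_norm[OF c\<phi>] by simp
  ultimately obtain K where K: "compact K" and Kq: "\<forall>f\<in>A. (\<forall>x\<in>K. f x = 0) \<longrightarrow> q f = 0"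
    using cl unfolding compactly_localized_def by blast
  have vanish: "\<phi> f = 0" if "f \<in> A" "\<forall>x\<in>K. f x = 0" for f
    using Kq that unfolding q_def by auto
  have sumA: "(\<lambda>y. \<Sum>i\<in>I. p i y) \<in> A \<and> \<phi> (\<lambda>y. \<Sum>i\<in>I. p i y) = (\<Sum>i\<in>I. \<phi> (p i))"
    if "finite I" "\<forall>i\<in>I. p i \<in> A" for I and p :: "'b \<Rightarrow> 'a \<Rightarrow> 'k"
    using that
  proof (induction I rule: finite_induct)
    case empty
    then show ?case using const[of 0] pconst[of 0] by simp
  next
    case (insert a I)
    then have "(\<lambda>y. \<Sum>i\<in>I. p i y) \<in> A" "\<phi> (\<lambda>y. \<Sum>i\<in>I. p i y) = (\<Sum>i\<in>I. \<phi> (p i))" "p a \<in> A"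
      by auto
    then show ?case using insert(1,2) add padd by simp
  qed
  have "\<exists>x\<in>K. \<forall>f\<in>A. \<phi> f = f x"
  proof (rule ccontr)
    assume "\<not> (\<exists>x\<in>K. \<forall>f\<in>A. \<phi> f = f x)"
    then have "\<forall>x\<in>K. \<exists>g. g \<in> A \<and> \<phi> g \<noteq> g x" by auto
    from bchoice[OF this] obtain gx where gx: "\<forall>x\<in>K. gx x \<in> A \<and> \<phi> (gx x) \<noteq> gx x x" by blast
    define hh where "hh x = (\<lambda>y. gx x y + (- \<phi> (gx x)))" for x
    have hhA: "hh x \<in> A" if "x \<in> K" for x unfolding hh_def by (rule add[OF _ const]) (use gx that in auto)
    have phh: "\<phi> (hh x) = 0" if "x \<in> K" for x unfolding hh_def using padd[OF _ const, of "gx x" "- \<phi> (gx x)"] gx that pconst by simp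
    have hhx: "hh x x \<noteq> 0" if "x \<in> K" for x unfolding hh_def using gx that by auto
    define pp where "pp x = (\<lambda>y. hh x y * cj (hh x y))" for x
    have ppA: "pp x \<in> A" if "x \<in> K" for x unfolding pp_def using hhA[OF that] cjA mult by auto
    have ppp: "\<phi> (pp x) = 0" if "x \<in> K" for x
      unfolding pp_def using hhA[OF that] cjA pmult phh[OF that] by auto
    have ppv: "pp x y = of_real (norm (hh x y) ^ 2)" for x y unfolding pp_def by (rule cjn)
    have hhc: "continuous_on UNIV (hh x)" if "x \<in> K" for x using contf hhA that by auto
    have "K \<subseteq> (\<Union>x\<in>K. {y. 0 < norm (hh x y)})" using hhx by auto
    moreover have "open {y. 0 < norm (hh x y)}" if "x \<in> K" for x
      using hhc[OF that] by (intro open_Collect_less continuous_intros) auto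
    ultimately obtain C' where C': "C' \<subseteq> K" "finite C'" "K \<subseteq> (\<Union>x\<in>C'. {y. 0 < norm (hh x y)})"
      using compactE_image[OF K, of K "\<lambda>x. {y. 0 < norm (hh x y)}"] by blast
    define R where "R y = (\<Sum>x\<in>C'. norm (hh x y) ^ 2)" for y
    define H where "H = (\<lambda>y. of_real (R y) :: 'k)"
    have H_eq: "H = (\<lambda>y. \<Sum>x\<in>C'. pp x y)" unfolding H_def R_def ppv by (simp add: of_real_sum)
    have allA: "\<forall>i\<in>C'. pp i \<in> A" using C'(1) ppA by auto
    have HA: "H \<in> A" and pH0: "\<phi> H = (\<Sum>i\<in>C'. \<phi> (pp i))"
      using sumA[OF C'(2) allA] unfolding H_eq by auto
    have "(\<Sum>i\<in>C'. \<phi> (pp i)) = 0" using C'(1) ppp by (intro sum.neutral) auto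
    then have pH: "\<phi> H = 0" using pH0 by simp
    have Rc: "continuous_on UNIV R" unfolding R_def
      using C'(1) hhc by (intro continuous_on_sum continuous_intros) auto
    have Rnn: "R y \<ge> 0" for y unfolding R_def by (simp add: sum_nonneg)
    have Rpos: "R y > 0" if yK: "y \<in> K" for y
    proof -
      obtain x where x: "x \<in> C'" "0 < norm (hh x y)" using C'(3) yK by blast
      show ?thesis unfolding R_def by (rule sum_pos2[OF C'(2) x(1)]) (use x in auto)
    qed
    obtain d where d: "d > 0" "\<forall>y\<in>K. d < R y"
    proof (cases "K = {}")
      case True then show ?thesis using that[of 1] by auto
    next
      case False
      have "compact (R ` K)" using compact_continuous_image[OF continuous_on_subset[OF Rc] K] by auto
      then obtain s where s: "s \<in> R ` K" "\<forall>t\<in>R ` K. s \<le> t"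
        using compact_attains_inf[of "R ` K"] False by auto
      have "s > 0" using s(1) Rpos by auto
      then show ?thesis using that[of "s/2"] s(2) by fastforce
    qed
    have "closed {y. R y \<le> d}" using Rc by (intro closed_Collect_le continuous_intros) auto
    moreover have "K \<inter> {y. R y \<le> d} = {}" using d by force
    ultimately obtain u where u: "u \<in> A" "\<forall>x. u x \<in> of_real ` {0..1}" "\<forall>x\<in>K. u x = 1"
      "\<forall>x\<in>{y. R y \<le> d}. u x = 0"
      using sep K unfolding separates_compact_closed_def by blast
    define f1 where "f1 = (\<lambda>y. 1 + (-1) * u y)"
    have f1A: "f1 \<in> A" unfolding f1_def by (rule add[OF one smul[OF u(1)]])
    have pf1: "\<phi> f1 = 0" using vanish[OF f1A] u(3) unfolding f1_def by auto
    define G where "G = (\<lambda>y. H y + f1 y)"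
    have GA: "G \<in> A" unfolding G_def using HA f1A add by auto
    have pG: "\<phi> G = 0" unfolding G_def using HA f1A padd pH pf1 by auto
    have Gnz: "G y \<noteq> 0" for y
    proof -
      obtain t where t: "t \<in> {0..1}" "u y = of_real t" using u(2) by blast
      have Geq: "G y = of_real (R y + 1 - t)" unfolding G_def H_def f1_def t(2) by simp
      have r: "R y + 1 - t > 0"
      proof (cases "R y \<le> d")
        case True
        then have "u y = 0" using u(4) by auto
        then have "t = 0" using t(2) by simp
        then show ?thesis using Rnn[of y] by simp
      next
        case False
        then show ?thesis using d(1) t(1) by simp
      qed
      have "R y + 1 - t \<noteq> 0" using r by linarith
      then have "of_real (R y + 1 - t) \<noteq> (0::'k)" by (subst of_real_eq_0_iff)
      then show ?thesis unfolding Geq .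
    qed
    have fullA: "\<forall>f\<in>A. (\<forall>x. f x \<noteq> 0) \<longrightarrow> (\<lambda>x. inverse (f x)) \<in> A"
      using full unfolding full_subalgebra_def .
    have GiA: "(\<lambda>y. inverse (G y)) \<in> A" using fullA[rule_format, OF GA] Gnz by simp
    have "(\<lambda>y. G y * inverse (G y)) = (\<lambda>y. 1)" using Gnz by (simp add: fun_eq_iff)
    then have "\<phi> (\<lambda>y. G y * inverse (G y)) = 1" using pone by simp
    moreover have "\<phi> (\<lambda>y. G y * inverse (G y)) = 0" using pmult[OF GA GiA] pG by simp
    ultimately show False by simp
  qed
  then obtain x where x: "x \<in> K" "\<forall>f\<in>A. \<phi> f = f x" by blast
  have "\<phi> = eval_map A x"
  proof (rule ext)
    fix f show "\<phi> f = eval_map A x f"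
    proof (cases "f \<in> A")
      case True
      have "eval_map A x f = f x" unfolding eval_map_def using True by simp
      moreover from x(2) True have "\<phi> f = f x" by blast
      ultimately show ?thesis by simp
    next
      case False
      have "\<phi> f = undefined" using phiext False by (rule extensional_arb)
      moreover have "eval_map A x f = undefined" unfolding eval_map_def using False by simp
      ultimately show ?thesis by simp
    qed
  qed
  then show ?thesis by simp
qed

lemma main:
  "(\<forall>x. eval_map A x \<in> cont_characters A \<tau>) \<and>
   homeomorphic_map euclidean
     (subtopology (ucp_topology \<tau> (cont_characters A \<tau>)) (range (eval_map A))) (eval_map A) \<and>
   (compactly_localized A \<tau> \<longrightarrow>
      range (eval_map A) = cont_characters A \<tau> \<and>
      homeomorphic_map euclidean (ucp_topology \<tau> (cont_characters A \<tau>)) (eval_map A))"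
proof (intro conjI allI impI)
  show "eval_map A x \<in> cont_characters A \<tau>" for x by (rule delta_in)
  show "homeomorphic_map euclidean
     (subtopology (ucp_topology \<tau> (cont_characters A \<tau>)) (range (eval_map A))) (eval_map A)"
    by (rule delta_homeo)
  assume cl: "compactly_localized A \<tau>"
  show R: "range (eval_map A) = cont_characters A \<tau>"
    using delta_in surj_delta[OF cl] by blast
  have "subtopology (ucp_topology \<tau> (cont_characters A \<tau>)) (range (eval_map A)) =
        ucp_topology \<tau> (cont_characters A \<tau>)"
    unfolding R by (metis subtopology_topspace ucp_topspace)
  then show "homeomorphic_map euclidean (ucp_topology \<tau> (cont_characters A \<tau>)) (eval_map A)"
    using delta_homeo by simp
qed

end


theorem theorem6p13:
  assumes "k_space (euclidean :: ('a::t2_space) topology)"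
  shows
   "(\<forall>(A :: ('a \<Rightarrow> real) set) \<tau>.
       unital_subalgebra A \<and> full_subalgebra A \<and>
       locally_convex_topology A \<tau> \<and> continuous_map \<tau> compact_open_topology id \<and>
       separates_compact_closed A \<longrightarrow>
         (\<forall>x. eval_map A x \<in> cont_characters A \<tau>) \<and>
         homeomorphic_map euclidean
           (subtopology (ucp_topology \<tau> (cont_characters A \<tau>)) (range (eval_map A))) (eval_map A) \<and>
         (compactly_localized A \<tau> \<longrightarrow>
            range (eval_map A) = cont_characters A \<tau> \<and>
            homeomorphic_map euclidean (ucp_topology \<tau> (cont_characters A \<tau>)) (eval_map A)))
    \<and>
    (\<forall>(A :: ('a \<Rightarrow> complex) set) \<tau>.
       unital_subalgebra A \<and> full_subalgebra A \<and> self_adjoint A \<and>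
       locally_convex_topology A \<tau> \<and> continuous_map \<tau> compact_open_topology id \<and>
       separates_compact_closed A \<longrightarrow>
         (\<forall>x. eval_map A x \<in> cont_characters A \<tau>) \<and>
         homeomorphic_map euclidean
           (subtopology (ucp_topology \<tau> (cont_characters A \<tau>)) (range (eval_map A))) (eval_map A) \<and>
         (compactly_localized A \<tau> \<longrightarrow>
            range (eval_map A) = cont_characters A \<tau> \<and>
            homeomorphic_map euclidean (ucp_topology \<tau> (cont_characters A \<tau>)) (eval_map A)))"
  proof (rule conjI; intro allI impI)
  fix A :: "('a \<Rightarrow> real) set" and \<tau>
  assume H: "unital_subalgebra A \<and> full_subalgebra A \<and>
       locally_convex_topology A \<tau> \<and> continuous_map \<tau> compact_open_topology id \<and>
       separates_compact_closed A"
  interpret S: setting A \<tau> "\<lambda>z. z"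
  proof
    show "k_space (euclidean :: 'a topology)" by (rule assms)
    show "z * z = of_real (norm z ^ 2)" for z :: real by (simp add: power2_eq_square)
  qed (use H in auto)
  show "(\<forall>x. eval_map A x \<in> cont_characters A \<tau>) \<and>
         homeomorphic_map euclidean
           (subtopology (ucp_topology \<tau> (cont_characters A \<tau>)) (range (eval_map A))) (eval_map A) \<and>
         (compactly_localized A \<tau> \<longrightarrow>
            range (eval_map A) = cont_characters A \<tau> \<and>
            homeomorphic_map euclidean (ucp_topology \<tau> (cont_characters A \<tau>)) (eval_map A))"
    by (rule S.main)
next
  fix A :: "('a \<Rightarrow> complex) set" and \<tau>
  assume H: "unital_subalgebra A \<and> full_subalgebra A \<and> self_adjoint A \<and>
       locally_convex_topology A \<tau> \<and> continuous_map \<tau> compact_open_topology id \<and>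
       separates_compact_closed A"
  interpret S: setting A \<tau> cnj
  proof
    show "k_space (euclidean :: 'a topology)" by (rule assms)
    show "z * cnj z = of_real (norm z ^ 2)" for z :: complex by (rule complex_norm_square[symmetric])
    show "(\<lambda>x. cnj (f x)) \<in> A" if "f \<in> A" for f using H that unfolding self_adjoint_def by auto
  qed (use H in auto)
  show "(\<forall>x. eval_map A x \<in> cont_characters A \<tau>) \<and>
         homeomorphic_map euclidean
           (subtopology (ucp_topology \<tau> (cont_characters A \<tau>)) (range (eval_map A))) (eval_map A) \<and>
         (compactly_localized A \<tau> \<longrightarrow>
            range (eval_map A) = cont_characters A \<tau> \<and>
            homeomorphic_map euclidean (ucp_topology \<tau> (cont_characters A \<tau>)) (eval_map A))"
    by (rule S.main)
qed

end
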